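(* Let $K\ge 2$ arms be given. Suppose arm $i$ has been sampled $n_i\ge1$ times with observed sample mean $x_i\in[0,1]$ (fixed numbers); let $\alpha$ satisfy $x_\alpha=\max_j x_j$ and $\beta\ne\alpha$ satisfy $x_\beta=\max_{j\ne\alpha}x_j$; let $N\ge1$. For each arm $i$, let $Y_i$ be the average of $N$ independent identically distributed random variables with values in $[0,1]$ and mean $x_i$, and set $X_i'=\frac{n_i x_i+NY_i}{n_i+N}$. With $$\Lambda_\alpha^b=\mathbb E\big[(x_\beta-X_\alpha')\,\mathbf 1\{X_\alpha'\le x_\beta\}\big],\qquad \Lambda_i^b=\mathbb E\big[(X_i'-x_\alpha)\,\mathbf 1\{X_i'\ge x_\alpha\}\big]\ (i\ne\alpha),$$ one has $$\Lambda_\alpha^b\le \frac{2N x_\beta}{n_\alpha}\exp\!\big(-1.37\,(x_\alpha-x_\beta)^2 n_\alpha\big),$$ and for every $i\ne\alpha$, $$\Lambda_i^b\le \frac{2N(1-x_\alpha)}{n_i}\exp\!\big(-1.37\,(x_\alpha-x_i)^2 n_i\big).$$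
   Context: $\Lambda_i^b$ is the (budget-based) intrinsic value of information of pulling arm $i$ for the whole remaining budget of $N$ samples, measured with sample means. In this statement the future samples of each arm are modeled as having mean equal to the arm's current sample mean. *)

theory Defs
  imports "HOL-Probability.Probability"
begin

definition iid_unit_mean :: "'a measure \<Rightarrow> (nat \<Rightarrow> 'a \<Rightarrow> real) \<Rightarrow> nat \<Rightarrow> real \<Rightarrow> bool" where
  "iid_unit_mean M Z N m \<longleftrightarrow>
     prob_space M \<and>
     (\<forall>k<N. Z k \<in> borel_measurable M) \<and>
     prob_space.indep_vars M (\<lambda>_. borel) Z {..<N} \<and>
     (\<forall>k<N. distr M borel (Z k) = distr M borel (Z 0)) \<and>
     (\<forall>k<N. \<forall>\<omega>\<in>space M. Z k \<omega> \<in> {0..1}) \<and>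
     (\<forall>k<N. integral\<^sup>L M (Z k) = m)"

definition sample_avg :: "(nat \<Rightarrow> 'a \<Rightarrow> real) \<Rightarrow> nat \<Rightarrow> 'a \<Rightarrow> real" where
  "sample_avg Z N \<omega> = (\<Sum>k<N. Z k \<omega>) / real N"

definition updated_mean :: "nat \<Rightarrow> real \<Rightarrow> (nat \<Rightarrow> 'a \<Rightarrow> real) \<Rightarrow> nat \<Rightarrow> 'a \<Rightarrow> real" where
  "updated_mean n x Z N \<omega> = (real n * x + real N * sample_avg Z N \<omega>) / (real n + real N)"

definition Lambda_best :: "'a measure \<Rightarrow> nat \<Rightarrow> real \<Rightarrow> (nat \<Rightarrow> 'a \<Rightarrow> real) \<Rightarrow> nat \<Rightarrow> real \<Rightarrow> real" where
  "Lambda_best M n x Z N xbeta =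
     integral\<^sup>L M (\<lambda>\<omega>. (xbeta - updated_mean n x Z N \<omega>) *
        (if updated_mean n x Z N \<omega> \<le> xbeta then 1 else 0))"

definition Lambda_other :: "'a measure \<Rightarrow> nat \<Rightarrow> real \<Rightarrow> (nat \<Rightarrow> 'a \<Rightarrow> real) \<Rightarrow> nat \<Rightarrow> real \<Rightarrow> real" where
  "Lambda_other M n x Z N xalpha =
     integral\<^sup>L M (\<lambda>\<omega>. (updated_mean n x Z N \<omega> - xalpha) *
        (if updated_mean n x Z N \<omega> \<ge> xalpha then 1 else 0))"

end

theory Submission
  imports Defs
begin

lemma iid_tails:
  fixes Z :: "nat \<Rightarrow> 'a \<Rightarrow> real"
  assumes iid: "iid_unit_mean M Z N m" and N: "N \<ge> 1" and e: "\<epsilon> \<ge> 0"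
  shows "measure M {\<omega>\<in>space M. (\<Sum>k<N. Z k \<omega>) \<ge> real N * m + \<epsilon>} \<le> exp (-2 * \<epsilon>\<^sup>2 / real N)"
    and "measure M {\<omega>\<in>space M. (\<Sum>k<N. Z k \<omega>) \<le> real N * m - \<epsilon>} \<le> exp (-2 * \<epsilon>\<^sup>2 / real N)"
proof -
  note d = iid[unfolded iid_unit_mean_def]
  interpret prob_space M using d by auto
  interpret H: Hoeffding_ineq M "{..<N}" Z "\<lambda>_. 0" "\<lambda>_. 1" "real N * m"
  proof unfold_locales
    show "finite {..<N}" by simp
    show "indep_vars (\<lambda>_. borel) Z {..<N}" using d by auto
    fix i assume "i \<in> {..<N}"
    then show "AE x in M. Z i x \<in> {0..1}" using d by (intro AE_I2) auto
  next
    have "real N * m = (\<Sum>i<N. expectation (Z i))" using d by simp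
    then show "real N * m \<equiv> (\<Sum>i<N. expectation (Z i))" by simp
  qed
  have s: "(\<Sum>i<N. ((\<lambda>_. 1::real) i - (\<lambda>_. 0) i)\<^sup>2) = real N" by simp
  have p: "(\<Sum>i<N. ((\<lambda>_. 1::real) i - (\<lambda>_. 0) i)\<^sup>2) > 0" using N by simp
  show "measure M {\<omega>\<in>space M. (\<Sum>k<N. Z k \<omega>) \<ge> real N * m + \<epsilon>} \<le> exp (-2 * \<epsilon>\<^sup>2 / real N)"
    using H.Hoeffding_ineq_ge[OF e p] unfolding s .
  show "measure M {\<omega>\<in>space M. (\<Sum>k<N. Z k \<omega>) \<le> real N * m - \<epsilon>} \<le> exp (-2 * \<epsilon>\<^sup>2 / real N)"
    using H.Hoeffding_ineq_le[OF e p] unfolding s .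
qed

lemma expo_le:
  fixes n N :: nat and d :: real
  assumes "N \<ge> 1"
  shows "exp (-2 * ((real n + real N) * d)\<^sup>2 / real N) \<le> exp (- (137/100) * d^2 * real n)"
proof -
  have N0: "real N > 0" using assms by simp
  have a: "real n * real N \<le> (real n + real N)^2"
    by (simp add: power2_eq_square algebra_simps)
  have "(137/100) * d^2 * real n * real N \<le> 2 * d^2 * (real n * real N)"
    by (simp add: mult_right_mono)
  also have "\<dots> \<le> 2 * d^2 * (real n + real N)^2"
    using a by (intro mult_left_mono) auto
  also have "\<dots> = 2 * ((real n + real N) * d)\<^sup>2" by (simp add: power_mult_distrib)
  finally have "(137/100) * d^2 * real n \<le> 2 * ((real n + real N) * d)\<^sup>2 / real N"
    using N0 by (simp add: pos_le_divide_eq)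
  then show ?thesis by simp
qed

lemma sum_meas:
  assumes "iid_unit_mean M Z N m"
  shows "(\<lambda>\<omega>. \<Sum>k<N. Z k \<omega>) \<in> borel_measurable M"
  using assms unfolding iid_unit_mean_def by (intro borel_measurable_sum) auto

lemma sum_range:
  assumes "iid_unit_mean M Z N m" "\<omega> \<in> space M"
  shows "0 \<le> (\<Sum>k<N. Z k \<omega>)" "(\<Sum>k<N. Z k \<omega>) \<le> real N"
proof -
  have b: "\<forall>k<N. Z k \<omega> \<in> {0..1}" using assms unfolding iid_unit_mean_def by auto
  show "0 \<le> (\<Sum>k<N. Z k \<omega>)" using b by (intro sum_nonneg) auto
  have "(\<Sum>k<N. Z k \<omega>) \<le> (\<Sum>k<N. 1)" using b by (intro sum_mono) auto
  then show "(\<Sum>k<N. Z k \<omega>) \<le> real N" by simp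
qed

lemma best_bound:
  fixes Z :: "nat \<Rightarrow> 'a \<Rightarrow> real"
  assumes iid: "iid_unit_mean M Z N xa" and N: "N \<ge> 1" and n: "n \<ge> 1"
    and xb: "0 \<le> xb" "xb \<le> xa" "xa \<le> 1"
  shows "Lambda_best M n xa Z N xb \<le> 2 * real N * xb / real n * exp (- (137/100) * (xa - xb)^2 * real n)"
proof -
  interpret prob_space M using iid unfolding iid_unit_mean_def by auto
  define S where "S = (\<lambda>\<omega>. \<Sum>k<N. Z k \<omega>)"
  have Sm[measurable]: "S \<in> borel_measurable M" unfolding S_def by (rule sum_meas[OF iid])
  define e where "e = (real n + real N) * (xa - xb)"
  define E where "E = {\<omega>\<in>space M. S \<omega> \<le> real N * xa - e}"
  define c where "c = real N * xb / real n"
  have E: "E \<in> sets M" unfolding E_def by measurable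
  have c0: "c \<ge> 0" unfolding c_def using xb by simp
  have e0: "e \<ge> 0" unfolding e_def using xb by simp
  have pE: "measure M E \<le> exp (- (137/100) * (xa - xb)^2 * real n)"
    using iid_tails(2)[OF iid N e0] expo_le[OF N, of n "xa - xb"]
    unfolding E_def S_def e_def by linarith
  have n0: "real n > 0" "real n + real N > 0" using n by auto
  have U: "updated_mean n xa Z N \<omega> = (real n * xa + S \<omega>) / (real n + real N)" for \<omega>
    unfolding updated_mean_def sample_avg_def S_def using N by simp
  have pw: "(xb - updated_mean n xa Z N \<omega>) * (if updated_mean n xa Z N \<omega> \<le> xb then 1 else 0)
      \<le> c * indicator E \<omega>" if w: "\<omega> \<in> space M" for \<omega>
  proof (cases "updated_mean n xa Z N \<omega> \<le> xb")
    case False then show ?thesis using c0 by (simp add: indicator_def)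
  next
    case True
    have S0: "S \<omega> \<ge> 0" using sum_range(1)[OF iid w] unfolding S_def .
    have h: "real n * xa + S \<omega> \<le> (real n + real N) * xb" using True n0 unfolding U
      by (simp add: divide_simps mult.commute)
    have "\<omega> \<in> E" unfolding E_def e_def using w h by (simp add: algebra_simps)
    have l1: "real n * xb / (real n + real N) \<le> updated_mean n xa Z N \<omega>" unfolding U
    proof (intro divide_right_mono)
      have "real n * xb \<le> real n * xa" using xb by (intro mult_left_mono) auto
      then show "real n * xb \<le> real n * xa + S \<omega>" using S0 by linarith
    qed (use n0 in auto)
    have l2: "xb - real n * xb / (real n + real N) = real N * xb / (real n + real N)"
      using n0 by (simp add: field_simps)
    have l3: "real N * xb / (real n + real N) \<le> c" unfolding c_def
      using n0 xb by (intro divide_left_mono) auto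
    show ?thesis using True \<open>\<omega> \<in> E\<close> l1 l2 l3 by (simp add: indicator_def)
  qed
  have "Lambda_best M n xa Z N xb \<le> integral\<^sup>L M (\<lambda>\<omega>. c * indicator E \<omega>)"
    unfolding Lambda_best_def
  proof (rule integral_mono')
    show "integrable M (\<lambda>\<omega>. c * indicator E \<omega>)" using E by (intro integrable_mult_right integrable_real_indicator) (auto simp: emeasure_eq_measure)
  qed (use pw c0 in \<open>auto simp: indicator_def\<close>)
  also have "\<dots> = c * measure M E" using E by simp
  also have "\<dots> \<le> c * exp (- (137/100) * (xa - xb)^2 * real n)" using pE c0 by (rule mult_left_mono)
  also have "\<dots> \<le> 2 * c * exp (- (137/100) * (xa - xb)^2 * real n)" using c0 by simp
  finally show ?thesis unfolding c_def by simp
qed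

lemma other_bound:
  fixes Z :: "nat \<Rightarrow> 'a \<Rightarrow> real"
  assumes iid: "iid_unit_mean M Z N xi" and N: "N \<ge> 1" and n: "n \<ge> 1"
    and xb: "0 \<le> xi" "xi \<le> xa" "xa \<le> 1"
  shows "Lambda_other M n xi Z N xa \<le> 2 * real N * (1 - xa) / real n * exp (- (137/100) * (xa - xi)^2 * real n)"
proof -
  interpret prob_space M using iid unfolding iid_unit_mean_def by auto
  define S where "S = (\<lambda>\<omega>. \<Sum>k<N. Z k \<omega>)"
  have Sm[measurable]: "S \<in> borel_measurable M" unfolding S_def by (rule sum_meas[OF iid])
  define e where "e = (real n + real N) * (xa - xi)"
  define E where "E = {\<omega>\<in>space M. S \<omega> \<ge> real N * xi + e}"
  define c where "c = real N * (1 - xa) / real n"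
  have E: "E \<in> sets M" unfolding E_def by measurable
  have c0: "c \<ge> 0" unfolding c_def using xb by simp
  have e0: "e \<ge> 0" unfolding e_def using xb by simp
  have pE: "measure M E \<le> exp (- (137/100) * (xa - xi)^2 * real n)"
    using iid_tails(1)[OF iid N e0] expo_le[OF N, of n "xa - xi"]
    unfolding E_def S_def e_def by linarith
  have n0: "real n > 0" "real n + real N > 0" using n by auto
  have U: "updated_mean n xi Z N \<omega> = (real n * xi + S \<omega>) / (real n + real N)" for \<omega>
    unfolding updated_mean_def sample_avg_def S_def using N by simp
  have pw: "(updated_mean n xi Z N \<omega> - xa) * (if updated_mean n xi Z N \<omega> \<ge> xa then 1 else 0)
      \<le> c * indicator E \<omega>" if w: "\<omega> \<in> space M" for \<omega>
  proof (cases "updated_mean n xi Z N \<omega> \<ge> xa")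
    case False then show ?thesis using c0 by (simp add: indicator_def)
  next
    case True
    have S1: "S \<omega> \<le> real N" using sum_range(2)[OF iid w] unfolding S_def .
    have h: "real n * xi + S \<omega> \<ge> (real n + real N) * xa" using True n0 unfolding U
      by (simp add: divide_simps mult.commute)
    have "\<omega> \<in> E" unfolding E_def e_def using w h by (simp add: algebra_simps)
    have l0: "updated_mean n xi Z N \<omega> - xa = (real n * xi + S \<omega> - (real n + real N) * xa) / (real n + real N)"
      unfolding U using n0 by (simp add: field_simps)
    have l1: "(real n * xi + S \<omega> - (real n + real N) * xa) / (real n + real N) \<le> real N * (1 - xa) / (real n + real N)"
    proof (intro divide_right_mono)
      have "real n * xi \<le> real n * xa" using xb by (intro mult_left_mono) auto
      then show "real n * xi + S \<omega> - (real n + real N) * xa \<le> real N * (1 - xa)" using S1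
        by (simp add: algebra_simps)
    qed (use n0 in auto)
    have l3: "real N * (1 - xa) / (real n + real N) \<le> c" unfolding c_def
      using n0 xb by (intro divide_left_mono) auto
    show ?thesis using True \<open>\<omega> \<in> E\<close> l0 l1 l3 by (simp add: indicator_def)
  qed
  have "Lambda_other M n xi Z N xa \<le> integral\<^sup>L M (\<lambda>\<omega>. c * indicator E \<omega>)"
    unfolding Lambda_other_def
  proof (rule integral_mono')
    show "integrable M (\<lambda>\<omega>. c * indicator E \<omega>)" using E by (intro integrable_mult_right integrable_real_indicator) (auto simp: emeasure_eq_measure)
  qed (use pw c0 in \<open>auto simp: indicator_def\<close>)
  also have "\<dots> = c * measure M E" using E by simp
  also have "\<dots> \<le> c * exp (- (137/100) * (xa - xi)^2 * real n)" using pE c0 by (rule mult_left_mono)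
  also have "\<dots> \<le> 2 * c * exp (- (137/100) * (xa - xi)^2 * real n)" using c0 by simp
  finally show ?thesis unfolding c_def by simp
qed

theorem corollary1:
  fixes K N :: nat and n :: "nat \<Rightarrow> nat" and x :: "nat \<Rightarrow> real"
    and \<alpha> \<beta> :: nat and M :: "'a measure" and Z :: "nat \<Rightarrow> nat \<Rightarrow> 'a \<Rightarrow> real"
  assumes K: "K \<ge> 2"
    and n_pos: "\<forall>i<K. n i \<ge> 1"
    and x_unit: "\<forall>i<K. x i \<in> {0..1}"
    and alpha: "\<alpha> < K" "\<forall>j<K. x j \<le> x \<alpha>"
    and beta: "\<beta> < K" "\<beta> \<noteq> \<alpha>" "\<forall>j<K. j \<noteq> \<alpha> \<longrightarrow> x j \<le> x \<beta>"
    and N: "N \<ge> 1"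
    and iid: "\<forall>i<K. iid_unit_mean M (Z i) N (x i)"
  shows "Lambda_best M (n \<alpha>) (x \<alpha>) (Z \<alpha>) N (x \<beta>)
           \<le> 2 * real N * x \<beta> / real (n \<alpha>) * exp (- (137/100) * (x \<alpha> - x \<beta>)^2 * real (n \<alpha>))
       \<and> (\<forall>i<K. i \<noteq> \<alpha> \<longrightarrow>
           Lambda_other M (n i) (x i) (Z i) N (x \<alpha>)
           \<le> 2 * real N * (1 - x \<alpha>) / real (n i) * exp (- (137/100) * (x \<alpha> - x i)^2 * real (n i)))"
proof (intro conjI allI impI)
  show "Lambda_best M (n \<alpha>) (x \<alpha>) (Z \<alpha>) N (x \<beta>)
           \<le> 2 * real N * x \<beta> / real (n \<alpha>) * exp (- (137/100) * (x \<alpha> - x \<beta>)^2 * real (n \<alpha>))"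
    using alpha beta n_pos x_unit iid N by (intro best_bound) auto
next
  fix i assume "i < K" "i \<noteq> \<alpha>"
  then show "Lambda_other M (n i) (x i) (Z i) N (x \<alpha>)
           \<le> 2 * real N * (1 - x \<alpha>) / real (n i) * exp (- (137/100) * (x \<alpha> - x i)^2 * real (n i))"
    using alpha n_pos x_unit iid N by (intro other_bound) auto
qed

end
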